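(* Let $\epsilon\in(0,1/4)$. There is $n_0(\epsilon)$ such that the following holds for $n\ge n_0$. Let $G$ be a graph on $n$ vertices with minimum degree $\delta$, where $\delta\ge(\ln n)^{2/\epsilon}(\ln\ln n)^{1/\epsilon}$, and assume $s^*=\delta^{1/2+\epsilon}$ and $k=\delta^{1/2-\epsilon}/\ln\ln n$ are integers. With the random partition $V(G)=B\cup S$, $S=S_1\cup\dots\cup S_k$ described in the context, with probability at least $1-1/n^2$ we have $|L(v)|\le\frac{42\,n\deg(v)\ln n}{k\,\delta^{1+\epsilon}}$ for every $v\in S$.
   Context: Graphs are finite and simple; $\deg(v)$ is the degree of $v$ in $G$; $\ln$ is the natural logarithm. Random partition: let $X_v$, $v\in V(G)$, be i.i.d. uniform on $[0,1]$. For each integer $1\le i\le\delta-s^*$, put $v$ in $B_i$ if $X_v\in[\frac{i-1}{\delta},\frac{i}{\delta})$. For $1\le j\le k-1$, put $v$ in $S_j$ if $X_v\in\left[\frac{\delta-s^*}{\delta}+\frac{(j-1)s^*}{\delta k},\frac{\delta-s^*}{\delta}+\frac{js^*}{\delta k}\right)$, and put $v$ in $S_k$ if $X_v\in\left[\frac{\delta-s^*}{\delta}+\frac{(k-1)s^*}{\delta k},1\right]$. Let $B=\bigcup_iB_i$, $S=\bigcup_jS_j$. For $v\in S_i$ define the interval $I_{v,i}=\left[\deg(v)\left(1-\frac{4s^*i}{\delta}-\frac{34\ln n}{\delta^{\epsilon}}\right),\ \deg(v)\left(1-\frac{4s^*i}{\delta}+\frac{3s^*}{\delta}\right)\right]$.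 For $v\in S_i$, $L(v)$ is the set of vertices $u\in S$, $u\ne v$, such that $u\in S_j$ with $I_{v,i}\cap I_{u,j}\neq\emptyset$. *)

theory Defs
  imports "HOL-Probability.Probability"
begin

text \<open>Simple graph: finite vertex set V (of naturals) and a symmetric irreflexive
  adjacency relation E; the degree of v counts neighbours in V.\<close>

definition deg :: "nat set \<Rightarrow> (nat \<Rightarrow> nat \<Rightarrow> bool) \<Rightarrow> nat \<Rightarrow> nat" where
  "deg V E v = card {u \<in> V. E v u}"

definition mindeg :: "nat set \<Rightarrow> (nat \<Rightarrow> nat \<Rightarrow> bool) \<Rightarrow> nat" where
  "mindeg V E = Min (deg V E ` V)"

text \<open>The part S_j (1 \<le> j \<le> k) of the random partition, for delta = minimum degree,
  s = s^*, and sample X (X v = X_v).\<close>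

definition Spart :: "nat set \<Rightarrow> (nat \<Rightarrow> nat \<Rightarrow> bool) \<Rightarrow> nat \<Rightarrow> nat \<Rightarrow> (nat \<Rightarrow> real) \<Rightarrow> nat \<Rightarrow> nat set" where
  "Spart V E s k X j =
    (let d = real (mindeg V E); a = (d - real s) / d in
     {v \<in> V. 1 \<le> j \<and> j \<le> k \<and>
        a + (real j - 1) * real s / (d * real k) \<le> X v \<and>
        (if j < k then X v < a + real j * real s / (d * real k) else X v \<le> 1)})"

definition Sset :: "nat set \<Rightarrow> (nat \<Rightarrow> nat \<Rightarrow> bool) \<Rightarrow> nat \<Rightarrow> nat \<Rightarrow> (nat \<Rightarrow> real) \<Rightarrow> nat set" where
  "Sset V E s k X = (\<Union>j\<in>{1..k}. Spart V E s k X j)"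

definition Ival :: "nat set \<Rightarrow> (nat \<Rightarrow> nat \<Rightarrow> bool) \<Rightarrow> real \<Rightarrow> nat \<Rightarrow> nat \<Rightarrow> nat \<Rightarrow> real set" where
  "Ival V E \<epsilon> s v i =
    (let d = real (mindeg V E); n = real (card V); dv = real (deg V E v) in
     {dv * (1 - 4 * real s * real i / d - 34 * ln n / d powr \<epsilon>) ..
      dv * (1 - 4 * real s * real i / d + 3 * real s / d)})"

definition Lset :: "nat set \<Rightarrow> (nat \<Rightarrow> nat \<Rightarrow> bool) \<Rightarrow> real \<Rightarrow> nat \<Rightarrow> nat \<Rightarrow> (nat \<Rightarrow> real) \<Rightarrow> nat \<Rightarrow> nat set" where
  "Lset V E \<epsilon> s k X v =
    {u \<in> Sset V E s k X. u \<noteq> v \<and>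
       (\<exists>i j. v \<in> Spart V E s k X i \<and> u \<in> Spart V E s k X j \<and>
              Ival V E \<epsilon> s v i \<inter> Ival V E \<epsilon> s u j \<noteq> {})}"

definition labels :: "nat set \<Rightarrow> (nat \<Rightarrow> real) measure" where
  "labels V = PiM V (\<lambda>_. uniform_measure lborel {0..1::real})"

end

theory Submission
  imports Defs
begin


lemma J_count:
  fixes \<sigma> la D D' :: real and i k :: nat
  assumes \<sigma>: "\<sigma> > 0" and la: "la \<ge> 0" and D: "D \<ge> 0" and D': "D' > 0" and ik: "i \<le> k"
    and h1: "4*\<sigma>*real k + la \<le> 1/2" and h2: "3*\<sigma> \<le> 1/2"
  shows "real (card {j\<in>{1..k}. D'*(1 - 4*\<sigma>*real j - la) \<le> D*(1 - 4*\<sigma>*real i + 3*\<sigma>)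
              \<and> D*(1 - 4*\<sigma>*real i - la) \<le> D'*(1 - 4*\<sigma>*real j + 3*\<sigma>)}) \<le> 4 + la/\<sigma>"
    (is "real (card ?S) \<le> _")
proof (cases "?S = {}")
  case True
  show ?thesis unfolding True using \<sigma> la by simp
next
  case False
  have fin: "finite ?S" by simp
  define j0 where "j0 = Min ?S"
  have j0S: "j0 \<in> ?S" unfolding j0_def using fin False by (rule Min_in)
  have j0le: "j0 \<le> j" if "j \<in> ?S" for j unfolding j0_def using fin that by simp
  have DD: "D \<le> 3*D'"
  proof -
    have c2: "D*(1 - 4*\<sigma>*real i - la) \<le> D'*(1 - 4*\<sigma>*real j0 + 3*\<sigma>)" using j0S by simp
    have "D'*(4*\<sigma>*real j0) \<ge> 0" using D' \<sigma> by simp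
    then have "D'*(1 - 4*\<sigma>*real j0 + 3*\<sigma>) \<le> D'*(1 + 3*\<sigma>)" by (simp add: algebra_simps)
    also have "\<dots> \<le> D' * (3/2)" using D' h2 by (intro mult_left_mono) auto
    finally have u: "D*(1 - 4*\<sigma>*real i - la) \<le> D' * (3/2)" using c2 by linarith
    have "4*\<sigma>*real i \<le> 4*\<sigma>*real k" using \<sigma> ik by simp
    then have "1/2 \<le> 1 - 4*\<sigma>*real i - la" using h1 by linarith
    then have "D*(1/2) \<le> D*(1 - 4*\<sigma>*real i - la)" using D by (intro mult_left_mono)
    then show ?thesis using u by linarith
  qed
  have key: "real j - real j0 \<le> 3 + la/\<sigma>" if jS: "j \<in> ?S" for j
  proof -
    have c1: "D'*(1 - 4*\<sigma>*real j0 - la) \<le> D*(1 - 4*\<sigma>*real i + 3*\<sigma>)" using j0S by simp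
    have c2: "D*(1 - 4*\<sigma>*real i - la) \<le> D'*(1 - 4*\<sigma>*real j + 3*\<sigma>)" using jS by simp
    have "4*\<sigma>*D'*(real j - real j0) \<le> (3*\<sigma>+la)*(D + D')"
      using c1 c2 by (simp add: algebra_simps)
    also have "\<dots> \<le> (3*\<sigma>+la)*(4*D')" using DD \<sigma> la by (intro mult_left_mono) auto
    finally have "(4*D') * (\<sigma>*(real j - real j0)) \<le> (4*D') * (3*\<sigma>+la)" by (simp add: algebra_simps)
    then have "\<sigma>*(real j - real j0) \<le> 3*\<sigma>+la" using D' by simp
    then have "(real j - real j0) \<le> (3*\<sigma>+la)/\<sigma>" using \<sigma> by (simp add: field_simps)
    also have "(3*\<sigma>+la)/\<sigma> = 3 + la/\<sigma>" using \<sigma> by (simp add: field_simps)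
    finally show ?thesis .
  qed
  define L where "L = 3 + la/\<sigma>"
  have L0: "L \<ge> 0" unfolding L_def using \<sigma> la by simp
  have sub: "?S \<subseteq> {j0..j0 + nat \<lfloor>L\<rfloor>}"
  proof
    fix j assume jS: "j \<in> ?S"
    have "real j \<le> real j0 + L" using key[OF jS] unfolding L_def by linarith
    then have "int j \<le> int j0 + \<lfloor>L\<rfloor>" by linarith
    then show "j \<in> {j0..j0 + nat \<lfloor>L\<rfloor>}" using j0le[OF jS] L0 by auto
  qed
  have "card ?S \<le> card {j0..j0 + nat \<lfloor>L\<rfloor>}" by (rule card_mono[OF _ sub]) simp
  also have "\<dots> = nat \<lfloor>L\<rfloor> + 1" by simp
  finally have "real (card ?S) \<le> real (nat \<lfloor>L\<rfloor>) + 1" by linarith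
  also have "real (nat \<lfloor>L\<rfloor>) \<le> L" using L0 by linarith
  finally show ?thesis unfolding L_def by linarith
qed

lemma params:
  fixes \<epsilon> n d s k :: real
  assumes e1: "0 < \<epsilon>" and e2: "\<epsilon> < 1/4" and n: "n \<ge> exp (exp 16)" and dn: "d \<le> n"
    and dlow: "d \<ge> ln n powr (2/\<epsilon>) * ln (ln n) powr (1/\<epsilon>)"
    and s: "s = d powr (1/2+\<epsilon>)" and k: "k = d powr (1/2-\<epsilon>) / ln (ln n)"
  shows "d \<ge> 1" "ln n \<ge> 1" "ln (ln n) \<ge> 16" "s > 0" "k > 0"
    "s/d \<le> 1 / d powr \<epsilon>"
    "4*(s/d)*k + 34*ln n/d powr \<epsilon> \<le> 1/2"
    "3*(s/d) \<le> 1/2"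
    "(k * d powr \<epsilon>)^2 \<le> n"
    "k \<le> n"
    "d powr \<epsilon> \<ge> (ln n)^2 * ln (ln n)"
proof -
  have e16: "exp 16 \<ge> (17::real)" using exp_ge_add_one_self[of 16] by simp
  have npos: "n > 0" using n by (meson exp_gt_zero less_le_trans)
  have l1: "ln n \<ge> exp 16" using n npos by (metis exp_gt_zero ln_exp ln_le_cancel_iff)
  have l2: "ln (ln n) \<ge> 16"
    using l1 by (metis exp_gt_zero less_le_trans ln_exp ln_le_cancel_iff)
  show "ln n \<ge> 1" "ln (ln n) \<ge> 16" using l1 l2 e16 by linarith+
  define l where "l = ln n"
  define L where "L = ln (ln n)"
  have l: "l \<ge> 17" and L: "L \<ge> 16" using l1 l2 e16 unfolding l_def L_def by linarith+
  have "l powr (2/\<epsilon>) \<ge> 1" "L powr (1/\<epsilon>) \<ge> 1" using l L e1 by (simp_all add: ge_one_powr_ge_zero)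
  then have "l powr (2/\<epsilon>) * L powr (1/\<epsilon>) \<ge> 1" by (metis mult_mono' mult_1 zero_le_one)
  then show d1: "d \<ge> 1" using dlow unfolding l_def L_def by linarith
  have dpe: "d powr \<epsilon> \<ge> l^2 * L"
  proof -
    have "(l powr (2/\<epsilon>) * L powr (1/\<epsilon>)) powr \<epsilon> \<le> d powr \<epsilon>"
      using dlow e1 l L unfolding l_def L_def by (intro powr_mono2) auto
    moreover have "(l powr (2/\<epsilon>) * L powr (1/\<epsilon>)) powr \<epsilon> = l^2 * L"
    proof -
      have a: "(l powr (2/\<epsilon>)) powr \<epsilon> = l^2"
      proof -
        have "(l powr (2/\<epsilon>)) powr \<epsilon> = l powr 2" using e1 by (simp add: powr_powr)
        also have "\<dots> = l^2" using l by (simp add: powr_numeral)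
        finally show ?thesis .
      qed
      have b: "(L powr (1/\<epsilon>)) powr \<epsilon> = L" using e1 L by (simp add: powr_powr)
      show ?thesis using a b l L by (simp add: powr_mult)
    qed
    ultimately show ?thesis by simp
  qed
  then show "d powr \<epsilon> \<ge> (ln n)^2 * ln (ln n)" unfolding l_def L_def .
  have dpe_pos: "d powr \<epsilon> > 0" using d1 by simp
  show "s > 0" using s d1 by simp
  show kpos: "k > 0" using k d1 L unfolding L_def by simp
  have sd: "s/d = d powr (\<epsilon> - 1/2)"
  proof -
    have "d powr (\<epsilon> - 1/2) = d powr ((1/2+\<epsilon>) - 1)" by simp
    also have "\<dots> = d powr (1/2+\<epsilon>) / d powr 1" by (rule powr_diff)
    finally show ?thesis using s d1 by simp
  qed
  have "d powr (\<epsilon> - 1/2) \<le> d powr (-\<epsilon>)" using d1 e2 by (intro powr_mono) auto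
  also have "d powr (-\<epsilon>) = 1 / d powr \<epsilon>" by (simp add: powr_minus_divide)
  finally show sd_le: "s/d \<le> 1 / d powr \<epsilon>" using sd by simp
  have "l*l \<ge> 1*l" using l by (intro mult_right_mono) auto
  then have "l^2 \<ge> 17" using l unfolding power2_eq_square by linarith
  then have l2L: "l^2 * L \<ge> 17*16" using L by (intro mult_mono) auto
  have "4*(s/d)*k = 4 / L"
    using sd k d1 L unfolding L_def by (simp add: powr_add[symmetric])
  also have "\<dots> \<le> 1/4" using L by simp
  finally have A: "4*(s/d)*k \<le> 1/4" .
  have "34*ln n/d powr \<epsilon> \<le> 34 * l / (l^2 * L)"
    unfolding l_def[symmetric] using dpe l2L dpe_pos l by (intro divide_left_mono) auto
  also have "\<dots> = 34 / (l * L)" using l by (simp add: power2_eq_square)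
  also have "\<dots> \<le> 1/4"
  proof -
    have "l * L \<ge> 17 * 16" using l L by (intro mult_mono) auto
    then show ?thesis by (simp add: field_simps)
  qed
  finally show "4*(s/d)*k + 34*ln n/d powr \<epsilon> \<le> 1/2" using A by linarith
  have "1 / d powr \<epsilon> \<le> 1 / (l^2 * L)" using dpe l2L dpe_pos by (intro divide_left_mono) auto
  also have "\<dots> \<le> 1/6" using l2L by (simp add: field_simps)
  finally show "3*(s/d) \<le> 1/2" using sd_le by linarith
  have "k * d powr \<epsilon> = d powr (1/2) / L" using k d1 unfolding L_def by (simp add: powr_add[symmetric])
  then have "(k * d powr \<epsilon>)^2 = d / L^2"
    using d1 by (simp add: power_divide power2_eq_square powr_add[symmetric])
  also have "\<dots> \<le> d" using d1 L by (simp add: field_simps)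
  finally show "(k * d powr \<epsilon>)^2 \<le> n" using dn by linarith
  have "k \<le> d powr (1/2 - \<epsilon>)" using k L d1 unfolding L_def by (simp add: divide_le_eq)
  also have "\<dots> \<le> d powr 1" using d1 e1 by (intro powr_mono) auto
  finally show "k \<le> n" using dn d1 by simp
qed



abbreviation "U \<equiv> uniform_measure lborel {0..1::real}"

lemma U_prob: "prob_space U"
  by (rule prob_space_uniform_measure) auto

lemma labels_prob: "prob_space (labels V)"
  unfolding labels_def by (rule prob_space_PiM) (rule U_prob)

lemma comp_meas[measurable]: "(\<lambda>X. X v) \<in> borel_measurable (labels V)"
proof (cases "v \<in> V")
  case True
  have "(\<lambda>X. X v) \<in> measurable (labels V) U"
    unfolding labels_def using True by (rule measurable_component_singleton)
  then show ?thesis using measurable_cong_sets[of "labels V" "labels V" U borel] by simp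
next
  case False
  have "(\<lambda>X. X v) \<in> borel_measurable (labels V) \<longleftrightarrow> (\<lambda>X. undefined::real) \<in> borel_measurable (labels V)"
    by (rule measurable_cong) (use False in \<open>auto simp: labels_def space_PiM PiE_def extensional_def\<close>)
  then show ?thesis by simp
qed

lemma indep_coords: assumes False: "V \<noteq> {}" shows "prob_space.indep_vars (labels V) (\<lambda>_. borel) (\<lambda>u X. X u) V"
proof -
  interpret prob_space "labels V" by (rule labels_prob)
  have "indep_vars (\<lambda>_. U) (\<lambda>u X. X u) V"
  proof (subst indep_vars_iff_distr_eq_PiM'[OF False])
    show "random_variable U (\<lambda>X. X i)" if "i \<in> V" for i
      unfolding labels_def using that by (rule measurable_component_singleton)
    have 1: "distr (labels V) (Pi\<^sub>M V (\<lambda>_. U)) (\<lambda>x. \<lambda>i\<in>V. x i) = labels V"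
    proof -
      have "distr (labels V) (Pi\<^sub>M V (\<lambda>_. U)) (\<lambda>x. \<lambda>i\<in>V. x i) = distr (labels V) (labels V) (\<lambda>x. x)"
        by (rule distr_cong) (auto simp: labels_def space_PiM PiE_def extensional_def restrict_def fun_eq_iff)
      then show ?thesis by simp
    qed
    have 2: "(Pi\<^sub>M V (\<lambda>i. distr (labels V) U (\<lambda>X. X i))) = labels V"
      unfolding labels_def
      by (rule PiM_cong) (auto intro!: distr_PiM_component U_prob)
    show "distr (labels V) (Pi\<^sub>M V (\<lambda>_. U)) (\<lambda>x. \<lambda>i\<in>V. x i) = Pi\<^sub>M V (\<lambda>i. distr (labels V) U (\<lambda>X. X i))"
      using 1 2 by simp
  qed
  then show ?thesis
    by (rule indep_vars_compose2[where Y="\<lambda>_ x. x", simplified]) (rule measurable_ident_sets, simp)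
qed

lemma prob_coord:
  assumes "u \<in> V" "A \<in> sets borel"
  shows "measure (labels V) {X \<in> space (labels V). X u \<in> A} = measure U A"
proof -
  have "measure U A = measure (distr (labels V) U (\<lambda>X. X u)) A"
    unfolding labels_def using assms by (subst distr_PiM_component) (auto intro: U_prob)
  also have "\<dots> = measure (labels V) ((\<lambda>X. X u) -` A \<inter> space (labels V))"
    using assms by (subst measure_distr) (auto simp: labels_def)
  finally show ?thesis by (simp add: Int_def conj_commute vimage_def)
qed

lemma hoeff:
  assumes W: "finite W" "W \<noteq> {}" "W \<subseteq> V"
    and T: "\<And>u. u \<in> W \<Longrightarrow> T u \<in> sets borel" "\<And>u. u \<in> W \<Longrightarrow> measure U (T u) \<le> p"
    and t: "t \<ge> 0"
  shows "measure (labels V) {X\<in>space (labels V). real (card W) * p + t \<le> (\<Sum>u\<in>W. indicator (T u) (X u))}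
     \<le> exp (-2*t^2/real(card W))"
proof -
  interpret prob_space "labels V" by (rule labels_prob)
  have VN: "V \<noteq> {}" using W by auto
  define Y where "Y = (\<lambda>u (X::nat\<Rightarrow>real). indicator (T u) (X u) :: real)"
  have EY: "expectation (Y u) = measure U (T u)" if "u \<in> W" for u
  proof -
    have "expectation (Y u) = integral\<^sup>L (distr (labels V) U (\<lambda>X. X u)) (indicator (T u))"
      unfolding Y_def using that T W
      by (subst integral_distr) (auto simp: labels_def intro!: borel_measurable_indicator)
    also have "distr (labels V) U (\<lambda>X. X u) = U"
      unfolding labels_def using that W by (intro distr_PiM_component U_prob) auto
    also have "integral\<^sup>L U (indicator (T u)) = measure U (T u)"
      by (simp del: measure_uniform_measure)
    finally show ?thesis .
  qed
  have ind: "indep_vars (\<lambda>_. borel) Y W"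
    unfolding Y_def
    by (rule indep_vars_compose2[OF indep_vars_subset[OF indep_coords[OF VN] W(3)]]) (use T in auto)
  interpret H: Hoeffding_ineq "labels V" W Y "\<lambda>_. 0" "\<lambda>_. 1" "(\<Sum>i\<in>W. expectation (Y i))"
    by unfold_locales (use W ind in \<open>auto simp: Y_def\<close>)
  have mu: "(\<Sum>i\<in>W. expectation (Y i)) \<le> real (card W) * p"
  proof -
    have "(\<Sum>i\<in>W. expectation (Y i)) \<le> (\<Sum>i\<in>W. p)"
      by (intro sum_mono) (metis EY T(2))
    then show ?thesis by simp
  qed
  have A: "measure (labels V) {X\<in>space (labels V). real (card W) * p + t \<le> (\<Sum>u\<in>W. indicator (T u) (X u))}
     \<le> measure (labels V) {X\<in>space (labels V). (\<Sum>i\<in>W. Y i X) \<ge> (\<Sum>i\<in>W. expectation (Y i)) + t}"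
  proof (rule finite_measure_mono)
    have MM: "(\<lambda>X. \<Sum>i\<in>W. Y i X) \<in> borel_measurable (labels V)"
      unfolding Y_def
      by (rule borel_measurable_sum, rule measurable_compose[OF comp_meas borel_measurable_indicator]) (use T in auto)
    show "{X\<in>space (labels V). (\<Sum>i\<in>W. Y i X) \<ge> (\<Sum>i\<in>W. expectation (Y i)) + t} \<in> events"
      by (rule MM[unfolded borel_measurable_iff_ge, rule_format])
  next
    show "{X\<in>space (labels V). real (card W) * p + t \<le> (\<Sum>u\<in>W. indicator (T u) (X u))}
       \<subseteq> {X\<in>space (labels V). (\<Sum>i\<in>W. Y i X) \<ge> (\<Sum>i\<in>W. expectation (Y i)) + t}"
    proof (rule subsetI)
      fix X assume "X \<in> {X\<in>space (labels V). real (card W) * p + t \<le> (\<Sum>u\<in>W. indicator (T u) (X u))}"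
      then have X1: "X \<in> space (labels V)" and X2: "real (card W) * p + t \<le> (\<Sum>i\<in>W. Y i X)"
        by (simp_all only: mem_Collect_eq Y_def)
      have X3: "(\<Sum>i\<in>W. expectation (Y i)) + t \<le> (\<Sum>i\<in>W. Y i X)"
        using mu X2 by linarith
      show "X \<in> {X\<in>space (labels V). (\<Sum>i\<in>W. Y i X) \<ge> (\<Sum>i\<in>W. expectation (Y i)) + t}"
        by (simp only: mem_Collect_eq) (rule conjI[OF X1 X3])
    qed
  qed
  have B: "measure (labels V) {X\<in>space (labels V). (\<Sum>i\<in>W. Y i X) \<ge> (\<Sum>i\<in>W. expectation (Y i)) + t} \<le> exp (-2*t^2/real (card W))"
  proof -
    have B0: "measure (labels V) {X\<in>space (labels V). (\<Sum>i\<in>W. Y i X) \<ge> (\<Sum>i\<in>W. expectation (Y i)) + t} \<le> exp (-2*t^2/(\<Sum>i\<in>W. (1 - 0)^2))"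
      using t W by (intro H.Hoeffding_ineq_ge) (simp_all add: card_gt_0_iff)
    have E: "(\<Sum>i\<in>W. (1 - 0::real)^2) = real (card W)" by simp
    show ?thesis using B0 unfolding E .
  qed
  show ?thesis by (rule order_trans[OF A B])
qed




definition Pset :: "nat set \<Rightarrow> (nat \<Rightarrow> nat \<Rightarrow> bool) \<Rightarrow> nat \<Rightarrow> nat \<Rightarrow> nat \<Rightarrow> real set" where
  "Pset V E s k j =
    (let d = real (mindeg V E); a = (d - real s) / d in
     {x. a + (real j - 1) * real s / (d * real k) \<le> x \<and>
        (if j < k then x < a + real j * real s / (d * real k) else x \<le> 1)})"

lemma Spart_iff: "v \<in> Spart V E s k X j \<longleftrightarrow> v \<in> V \<and> 1 \<le> j \<and> j \<le> k \<and> X v \<in> Pset V E s k j"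
  unfolding Spart_def Pset_def Let_def by auto

lemma Pset_borel: "Pset V E s k j \<in> sets borel"
  unfolding Pset_def Let_def by measurable

lemma Spart_disj:
  assumes "real s > 0" "real (mindeg V E) > 0" "k > 0"
    and "v \<in> Spart V E s k X i" "v \<in> Spart V E s k X i'"
  shows "i = i'"
proof (rule ccontr)
  define d where "d = real (mindeg V E)"
  define a where "a = (d - real s) / d"
  define w where "w = real s / (d * real k)"
  have w: "w > 0" using assms unfolding w_def d_def by simp
  have P: "a + (real j - 1) * w \<le> X v \<and> (if j < k then X v < a + real j * w else X v \<le> 1)"
    if "v \<in> Spart V E s k X j" for j
    using that unfolding Spart_def Let_def d_def[symmetric] a_def[symmetric] w_def by (auto simp: mult.assoc)
  assume "i \<noteq> i'"
  then consider "i < i'" | "i' < i" by linarith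
  then show False
  proof cases
    case 1
    have "i' \<le> k" using assms(5) unfolding Spart_iff by auto
    then have "i < k" using 1 by linarith
    then have "X v < a + real i * w" using P[OF assms(4)] by simp
    moreover have "a + (real i' - 1) * w \<le> X v" using P[OF assms(5)] by simp
    moreover have "real i \<le> real i' - 1" using 1 by linarith
    then have "real i * w \<le> (real i' - 1) * w" using w by (intro mult_right_mono) auto
    ultimately show False by linarith
  next
    case 2
    have "i \<le> k" using assms(4) unfolding Spart_iff by auto
    then have "i' < k" using 2 by linarith
    then have "X v < a + real i' * w" using P[OF assms(5)] by simp
    moreover have "a + (real i - 1) * w \<le> X v" using P[OF assms(4)] by simp
    moreover have "real i' \<le> real i - 1" using 2 by linarith
    then have "real i' * w \<le> (real i - 1) * w" using w by (intro mult_right_mono) auto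
    ultimately show False by linarith
  qed
qed

lemma Pset_sub:
  fixes s :: nat
  assumes "real (mindeg V E) > 0" "k > 0" "1 \<le> j" "j \<le> k"
  defines "lo \<equiv> (real (mindeg V E) - real s) / real (mindeg V E) + (real j - 1) * real s / (real (mindeg V E) * real k)"
  shows "Pset V E s k j \<subseteq> {lo .. lo + real s / (real (mindeg V E) * real k)}"
proof
  fix x assume x: "x \<in> Pset V E s k j"
  define d where "d = real (mindeg V E)"
  have d: "d > 0" using assms d_def by simp
  have hi: "lo + real s / (d * real k) = (d - real s) / d + real j * real s / (d * real k)"
    unfolding lo_def d_def[symmetric] using d assms(2) by (simp add: field_simps)
  show "x \<in> {lo .. lo + real s / (real (mindeg V E) * real k)}"
  proof (cases "j < k")
    case True
    then show ?thesis using x hi unfolding Pset_def Let_def lo_def d_def by auto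
  next
    case False
    then have jk: "j = k" using assms by simp
    have "(d - real s) / d + real k * real s / (d * real k) = 1" using d assms(2) by (simp add: field_simps)
    then show ?thesis using x hi jk unfolding Pset_def Let_def lo_def d_def by auto
  qed
qed

lemma measU_Icc: assumes "a \<le> b" shows "measure U {a..b} \<le> b - a"
proof -
  have "measure U {a..b} = measure lborel ({0..1} \<inter> {a..b})" by simp
  also have "\<dots> \<le> measure lborel {a..b}"
    using fmeasurable_cbox[of a b] by (intro measure_mono_fmeasurable) auto
  finally show ?thesis using assms by simp
qed

lemma meas_Pset[measurable]: "Measurable.pred (labels V) (\<lambda>X. X v \<in> Pset V' E s k j)"
  by (rule pred_sets2[OF Pset_borel comp_meas])

lemma meas_Spart[measurable]: "Measurable.pred (labels V) (\<lambda>X. v \<in> Spart V' E s k X j)"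
  unfolding Spart_iff by measurable

lemma Lset_iff: "u \<in> Lset V E \<epsilon> s k X v \<longleftrightarrow> u \<in> V \<and> u \<noteq> v \<and> (\<exists>j\<in>{1..k}. u \<in> Spart V E s k X j) \<and>
   (\<exists>i\<in>{1..k}. \<exists>j\<in>{1..k}. v \<in> Spart V E s k X i \<and> u \<in> Spart V E s k X j \<and> Ival V E \<epsilon> s v i \<inter> Ival V E \<epsilon> s u j \<noteq> {})"
proof -
  have S1: "\<And>x i. x \<in> Spart V E s k X i \<Longrightarrow> i \<in> {1..k} \<and> x \<in> V" by (simp add: Spart_iff)
  show ?thesis unfolding Lset_def Sset_def mem_Collect_eq UN_iff using S1 by metis
qed

lemma meas_Lset[measurable]: "Measurable.pred (labels V) (\<lambda>X. u \<in> Lset V' E \<epsilon> s k X v)"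
  unfolding Lset_iff by measurable

lemma Lset_subset: "Lset V E \<epsilon> s k X v \<subseteq> V"
  by (auto simp only: Lset_iff)

lemma card_Lset: assumes "finite V"
  shows "real (card (Lset V E \<epsilon> s k X v)) = (\<Sum>u\<in>V. if u \<in> Lset V E \<epsilon> s k X v then 1 else 0)"
proof -
  have "Lset V E \<epsilon> s k X v = {u\<in>V. u \<in> Lset V E \<epsilon> s k X v}" using Lset_subset by blast
  then have "real (card (Lset V E \<epsilon> s k X v)) = (\<Sum>u\<in>{u\<in>V. u \<in> Lset V E \<epsilon> s k X v}. 1)" by simp
  also have "\<dots> = (\<Sum>u\<in>V. if u \<in> Lset V E \<epsilon> s k X v then 1 else 0)"
    using assms by (rule sum.inter_filter)
  finally show ?thesis .
qed

lemma meas_card_Lset[measurable]: assumes "finite V"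
  shows "(\<lambda>X. real (card (Lset V E \<epsilon> s k X v))) \<in> borel_measurable (labels V')"
  unfolding card_Lset[OF assms] by measurable

lemma Sset_iff: "v \<in> Sset V E s k X \<longleftrightarrow> v \<in> V \<and> (\<exists>j\<in>{1..k}. v \<in> Spart V E s k X j)"
  unfolding Sset_def by (auto simp: Spart_iff)

lemma A_meas: assumes "finite V"
  shows "{X\<in>space (labels V). \<forall>v\<in>Sset V E s k X. real (card (Lset V E \<epsilon> s k X v)) \<le> B v} \<in> sets (labels V)"
proof -
  have "{X\<in>space (labels V). \<forall>v\<in>Sset V E s k X. real (card (Lset V E \<epsilon> s k X v)) \<le> B v}
      = {X\<in>space (labels V). \<forall>v\<in>V. (\<exists>j\<in>{1..k}. v \<in> Spart V E s k X j) \<longrightarrow> real (card (Lset V E \<epsilon> s k X v)) \<le> B v}"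
    by (rule Collect_cong) (auto simp: Sset_iff)
  also have "\<dots> \<in> sets (labels V)"
    using assms by measurable
  finally show ?thesis .
qed

lemma bad_bound:
  fixes V :: "nat set" and s k :: nat
  assumes V: "finite V" "v \<in> V" "card V \<ge> 2"
    and pos: "real (mindeg V E) > 0" "real s > 0" "k > 0"
    and i: "i \<in> {1..k}"
    and J: "\<And>u. u \<in> V - {v} \<Longrightarrow> real (card {j\<in>{1..k}. Ival V E \<epsilon> s v i \<inter> Ival V E \<epsilon> s u j \<noteq> {}}) \<le> c"
    and c: "c \<ge> 0" and t: "t \<ge> 0"
    and Bv: "(real (card V) - 1) * (c * (real s / (real (mindeg V E) * real k))) + t \<le> Bv"
  shows "measure (labels V) {X\<in>space (labels V). v \<in> Spart V E s k X i \<and> Bv < real (card (Lset V E \<epsilon> s k X v))}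
     \<le> exp (-2*t^2/(real (card V) - 1))"
proof -
  interpret UU: prob_space U by (rule U_prob)
  interpret MM: prob_space "labels V" by (rule labels_prob)
  define W where "W = V - {v}"
  define w where "w = real s / (real (mindeg V E) * real k)"
  define p where "p = c * w"
  define J where "J = (\<lambda>u. {j\<in>{1..k}. Ival V E \<epsilon> s v i \<inter> Ival V E \<epsilon> s u j \<noteq> {}})"
  define T where "T = (\<lambda>u. \<Union>j\<in>J u. Pset V E s k j)"
  have w0: "w > 0" unfolding w_def using pos by simp
  have cardW: "real (card W) = real (card V) - 1" unfolding W_def using V by (simp add: of_nat_diff)
  have W: "finite W" "W \<noteq> {}" "W \<subseteq> V"
  proof -
    show "finite W" "W \<subseteq> V" unfolding W_def using V by auto
    have "card W \<ge> 1" using cardW V by linarith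
    then show "W \<noteq> {}" by auto
  qed
  have Tb: "T u \<in> sets borel" for u
    unfolding T_def J_def by (intro sets.finite_UN) (auto simp: Pset_borel)
  have mP: "measure U (Pset V E s k j) \<le> w" if "j \<in> {1..k}" for j
  proof -
    define lo where "lo = (real (mindeg V E) - real s) / real (mindeg V E) + (real j - 1) * real s / (real (mindeg V E) * real k)"
    have "measure U (Pset V E s k j) \<le> measure U {lo..lo+w}"
      using Pset_sub[of V E k j s] pos that unfolding lo_def w_def
      by (intro UU.finite_measure_mono) (auto simp: Pset_borel)
    also have "\<dots> \<le> w" using measU_Icc[of lo "lo+w"] w0 by simp
    finally show ?thesis .
  qed
  have mT: "measure U (T u) \<le> p" if "u \<in> W" for u
  proof -
    have "measure U (T u) \<le> (\<Sum>j\<in>J u. measure U (Pset V E s k j))"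
      unfolding T_def J_def
      by (intro UU.finite_measure_subadditive_finite) (auto simp: Pset_borel)
    also have "\<dots> \<le> (\<Sum>j\<in>J u. w)" using mP by (intro sum_mono) (auto simp: J_def)
    also have "\<dots> = real (card (J u)) * w" by simp
    also have "\<dots> \<le> c * w" using J[of u] that w0 unfolding J_def W_def by (intro mult_right_mono) auto
    finally show ?thesis unfolding p_def .
  qed
  have H: "measure (labels V) {X\<in>space (labels V). real (card W) * p + t \<le> (\<Sum>u\<in>W. indicator (T u) (X u))}
     \<le> exp (-2*t^2/real(card W))"
    by (rule hoeff[OF W Tb mT t])
  have sub: "{X\<in>space (labels V). v \<in> Spart V E s k X i \<and> Bv < real (card (Lset V E \<epsilon> s k X v))}
      \<subseteq> {X\<in>space (labels V). real (card W) * p + t \<le> (\<Sum>u\<in>W. indicator (T u) (X u))}"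
  proof (rule subsetI)
    fix X assume X: "X \<in> {X\<in>space (labels V). v \<in> Spart V E s k X i \<and> Bv < real (card (Lset V E \<epsilon> s k X v))}"
    then have Xs: "X \<in> space (labels V)" and vi: "v \<in> Spart V E s k X i"
      and XB: "Bv < real (card (Lset V E \<epsilon> s k X v))" by auto
    have Lsub: "Lset V E \<epsilon> s k X v \<subseteq> {u\<in>W. X u \<in> T u}"
    proof
      fix u assume u: "u \<in> Lset V E \<epsilon> s k X v"
      then obtain i' j where uV: "u \<in> V" "u \<noteq> v" and i': "i' \<in> {1..k}" and j: "j \<in> {1..k}"
        and vi': "v \<in> Spart V E s k X i'" and uj: "u \<in> Spart V E s k X j"
        and I: "Ival V E \<epsilon> s v i' \<inter> Ival V E \<epsilon> s u j \<noteq> {}"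
        unfolding Lset_iff by blast
      have "i' = i" using Spart_disj[OF pos(2) pos(1) pos(3) vi' vi] .
      then have "j \<in> J u" unfolding J_def using j I by simp
      moreover have "X u \<in> Pset V E s k j" using uj by (simp add: Spart_iff)
      ultimately have "X u \<in> T u" unfolding T_def by blast
      then show "u \<in> {u\<in>W. X u \<in> T u}" unfolding W_def using uV by simp
    qed
    have "real (card (Lset V E \<epsilon> s k X v)) \<le> real (card {u\<in>W. X u \<in> T u})"
      using W(1) by (intro of_nat_mono card_mono Lsub) auto
    also have "\<dots> = (\<Sum>u\<in>{u\<in>W. X u \<in> T u}. 1)" by simp
    also have "\<dots> = (\<Sum>u\<in>W. if X u \<in> T u then 1 else 0)" using W(1) by (rule sum.inter_filter)
    also have "\<dots> = (\<Sum>u\<in>W. indicator (T u) (X u))" by (intro sum.cong) (auto simp: indicator_def)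
    finally have "Bv < (\<Sum>u\<in>W. indicator (T u) (X u))" using XB by linarith
    moreover have "real (card W) * p + t \<le> Bv" using Bv unfolding cardW p_def w_def by simp
    ultimately show "X \<in> {X\<in>space (labels V). real (card W) * p + t \<le> (\<Sum>u\<in>W. indicator (T u) (X u))}"
      using Xs by simp
  qed
  have "measure (labels V) {X\<in>space (labels V). v \<in> Spart V E s k X i \<and> Bv < real (card (Lset V E \<epsilon> s k X v))}
     \<le> measure (labels V) {X\<in>space (labels V). real (card W) * p + t \<le> (\<Sum>u\<in>W. indicator (T u) (X u))}"
  proof (rule MM.finite_measure_mono[OF sub])
    have "(\<lambda>X. \<Sum>u\<in>W. indicator (T u) (X u) :: real) \<in> borel_measurable (labels V)"
      by (rule borel_measurable_sum, rule measurable_compose[OF comp_meas borel_measurable_indicator]) (use Tb in auto)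
    then show "{X\<in>space (labels V). real (card W) * p + t \<le> (\<Sum>u\<in>W. indicator (T u) (X u))} \<in> sets (labels V)"
      by (rule borel_measurable_iff_ge[THEN iffD1, rule_format])
  qed
  also note H
  finally show ?thesis unfolding cardW .
qed



lemma Ival_form:
  "Ival V E \<epsilon> s v i = {real (deg V E v) * (1 - 4 * (real s / real (mindeg V E)) * real i - 34 * ln (real (card V)) / real (mindeg V E) powr \<epsilon>) ..
      real (deg V E v) * (1 - 4 * (real s / real (mindeg V E)) * real i + 3 * (real s / real (mindeg V E)))}"
  unfolding Ival_def Let_def by (simp add: mult.commute mult.left_commute)

lemma Int_Icc_ne: assumes "{a..b} \<inter> {c..e::real} \<noteq> {}" shows "c \<le> b \<and> a \<le> e"
  using assms by auto

theorem claim5p3: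
  fixes \<epsilon> :: real
  assumes "0 < \<epsilon>" and "\<epsilon> < 1/4"
  shows "\<exists>n0::nat. \<forall>(V::nat set) (E::nat \<Rightarrow> nat \<Rightarrow> bool) (s::nat) (k::nat).
    finite V \<and> card V \<ge> n0 \<and>
    (\<forall>u v. E u v \<longrightarrow> E v u) \<and> (\<forall>v. \<not> E v v) \<and>
    real (mindeg V E) \<ge> ln (real (card V)) powr (2/\<epsilon>) * ln (ln (real (card V))) powr (1/\<epsilon>) \<and>
    real s = real (mindeg V E) powr (1/2 + \<epsilon>) \<and>
    real k = real (mindeg V E) powr (1/2 - \<epsilon>) / ln (ln (real (card V)))
    \<longrightarrow>
    measure (labels V)
      {X \<in> space (labels V). \<forall>v \<in> Sset V E s k X.
         real (card (Lset V E \<epsilon> s k X v))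
           \<le> 42 * real (card V) * real (deg V E v) * ln (real (card V))
              / (real k * real (mindeg V E) powr (1 + \<epsilon>))}
    \<ge> 1 - 1 / real (card V) ^ 2"
proof -
  note e1 = assms(1) and e2 = assms(2)
  define n0 where "n0 = nat \<lceil>exp (exp (16::real))\<rceil>"
  show ?thesis
  proof (intro exI[of _ n0] allI impI)
    fix V :: "nat set" and E :: "nat \<Rightarrow> nat \<Rightarrow> bool" and s k :: nat
    assume H: "finite V \<and> card V \<ge> n0 \<and>
    (\<forall>u v. E u v \<longrightarrow> E v u) \<and> (\<forall>v. \<not> E v v) \<and>
    real (mindeg V E) \<ge> ln (real (card V)) powr (2/\<epsilon>) * ln (ln (real (card V))) powr (1/\<epsilon>) \<and>
    real s = real (mindeg V E) powr (1/2 + \<epsilon>) \<and>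
    real k = real (mindeg V E) powr (1/2 - \<epsilon>) / ln (ln (real (card V)))"
    have finV: "finite V" and cardV: "card V \<ge> n0"
      and dlow: "real (mindeg V E) \<ge> ln (real (card V)) powr (2/\<epsilon>) * ln (ln (real (card V))) powr (1/\<epsilon>)"
      and seq: "real s = real (mindeg V E) powr (1/2 + \<epsilon>)"
      and keq: "real k = real (mindeg V E) powr (1/2 - \<epsilon>) / ln (ln (real (card V)))"
      using H by auto
    define n where "n = real (card V)"
    define d where "d = real (mindeg V E)"
    define l where "l = ln n"
    define B where "B = (\<lambda>v. 42 * real (card V) * real (deg V E v) * ln (real (card V))
              / (real k * real (mindeg V E) powr (1 + \<epsilon>)))"
    have e16: "exp (exp 16) \<ge> (2::real)"
    proof -
      have "exp 16 \<ge> (17::real)" using exp_ge_add_one_self[of 16] by simp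
      then have "exp (exp 16) \<ge> exp (1::real)" by simp
      moreover have "exp (1::real) \<ge> 2" using exp_ge_add_one_self[of 1] by simp
      ultimately show ?thesis by linarith
    qed
    have nge: "n \<ge> exp (exp 16)"
    proof -
      have "exp (exp 16) \<le> real n0" unfolding n0_def by linarith
      also have "\<dots> \<le> n" unfolding n_def using cardV by simp
      finally show ?thesis .
    qed
    have n2: "n \<ge> 2" using nge e16 by linarith
    have cardV2: "card V \<ge> 2" using n2 unfolding n_def by simp
    have Vne: "V \<noteq> {}" using cardV2 by auto
    have mindeg_le: "mindeg V E \<le> deg V E u" if "u \<in> V" for u
      unfolding mindeg_def using finV that by (intro Min_le) auto
    have deg_le: "deg V E u \<le> card V" for u
      unfolding deg_def using finV by (intro card_mono) auto
    obtain v0 where "v0 \<in> V" using Vne by blast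
    have dn: "d \<le> n" unfolding d_def n_def using mindeg_le[OF \<open>v0 \<in> V\<close>] deg_le[of v0] by linarith
    have dlow': "d \<ge> ln n powr (2/\<epsilon>) * ln (ln n) powr (1/\<epsilon>)" using dlow unfolding d_def n_def .
    have seq': "real s = d powr (1/2+\<epsilon>)" using seq unfolding d_def .
    have keq': "real k = d powr (1/2-\<epsilon>) / ln (ln n)" using keq unfolding d_def n_def .
    note P = params[OF e1 e2 nge dn dlow' seq' keq']
    define \<sigma> where "\<sigma> = real s / d"
    define la where "la = 34 * l / d powr \<epsilon>"
    define c where "c = 4 + la / \<sigma>"
    define m where "m = n * l / (real k * d powr \<epsilon>)"
    define t where "t = 4 * m"
    have dpos: "d > 0" using P by simp
    have dpe: "d powr \<epsilon> > 0" using dpos by simp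
    have sig: "\<sigma> > 0" unfolding \<sigma>_def using P dpos by simp
    have la0: "la \<ge> 0" unfolding la_def l_def using P dpe by simp
    have c0: "c \<ge> 0" unfolding c_def using sig la0 by simp
    have m0: "m > 0" unfolding m_def l_def using P dpe n2 by simp
    have t0: "t \<ge> 0" unfolding t_def using m0 by simp
    have Jb: "real (card {j\<in>{1..k}. Ival V E \<epsilon> s v i \<inter> Ival V E \<epsilon> s u j \<noteq> {}}) \<le> c"
      if v: "v \<in> V" and i: "i \<in> {1..k}" and u: "u \<in> V - {v}" for v i u
    proof -
      define D where "D = real (deg V E v)"
      define D' where "D' = real (deg V E u)"
      have D0: "D \<ge> 0" unfolding D_def by simp
      have D'0: "D' > 0" unfolding D'_def using mindeg_le[of u] u dpos unfolding d_def by force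
      have "{j\<in>{1..k}. Ival V E \<epsilon> s v i \<inter> Ival V E \<epsilon> s u j \<noteq> {}} \<subseteq>
        {j\<in>{1..k}. D'*(1 - 4*\<sigma>*real j - la) \<le> D*(1 - 4*\<sigma>*real i + 3*\<sigma>)
              \<and> D*(1 - 4*\<sigma>*real i - la) \<le> D'*(1 - 4*\<sigma>*real j + 3*\<sigma>)}"
        using Int_Icc_ne unfolding Ival_form D_def D'_def \<sigma>_def la_def l_def d_def n_def by blast
      then have "card {j\<in>{1..k}. Ival V E \<epsilon> s v i \<inter> Ival V E \<epsilon> s u j \<noteq> {}} \<le>
        card {j\<in>{1..k}. D'*(1 - 4*\<sigma>*real j - la) \<le> D*(1 - 4*\<sigma>*real i + 3*\<sigma>)
              \<and> D*(1 - 4*\<sigma>*real i - la) \<le> D'*(1 - 4*\<sigma>*real j + 3*\<sigma>)}"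
        by (intro card_mono) auto
      also have "real \<dots> \<le> 4 + la/\<sigma>"
        by (rule J_count[OF sig la0 D0 D'0]) (use i P in \<open>auto simp: \<sigma>_def la_def l_def\<close>)
      finally show ?thesis unfolding c_def by simp
    qed
    have Bb: "(real (card V) - 1) * (c * (real s / (real (mindeg V E) * real k))) + t \<le> B v"
      if v: "v \<in> V" for v
    proof -
      have ck: "c * (real s / (real (mindeg V E) * real k)) = (4*\<sigma> + la) / real k"
        unfolding c_def \<sigma>_def d_def using sig P unfolding \<sigma>_def d_def by (simp add: field_simps)
      have nonneg: "(4*\<sigma> + la) / real k \<ge> 0" using sig la0 P by simp
      have a1: "(real (card V) - 1) * ((4*\<sigma> + la) / real k) \<le> n * ((4*\<sigma> + la) / real k)"
        unfolding n_def using nonneg by (intro mult_right_mono) auto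
      have a2: "n * ((4*\<sigma> + la) / real k) = 4 * (n*\<sigma>/real k) + n*la/real k" by (simp add: distrib_left add_divide_distrib)
      have a3: "n*\<sigma>/real k \<le> m"
      proof -
        have "1 / d powr \<epsilon> \<le> l / d powr \<epsilon>"
          using P(2) dpe unfolding l_def by (intro divide_right_mono) auto
        then have "\<sigma> \<le> l / d powr \<epsilon>"
          using P(6) unfolding \<sigma>_def by linarith
        then have "n*\<sigma> \<le> n * (l / d powr \<epsilon>)" using n2 by (intro mult_left_mono) auto
        then have "n*\<sigma>/real k \<le> n * (l / d powr \<epsilon>) / real k" using P by (intro divide_right_mono) auto
        then show ?thesis unfolding m_def by (simp add: mult.commute)
      qed
      have a4: "n*la/real k = 34 * m" unfolding la_def m_def by (simp add: field_simps)
      have 1: "(real (card V) - 1) * (c * (real s / (real (mindeg V E) * real k))) + t \<le> 42 * m"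
        unfolding ck t_def using a1 a2 a3 a4 by linarith
      have "42 * m \<le> B v"
      proof -
        have Dd: "real (deg V E v) \<ge> d" unfolding d_def using mindeg_le[OF v] by simp
        have "B v = 42 * m * (real (deg V E v) / d)"
          unfolding B_def m_def n_def l_def d_def using dpos
          by (simp add: powr_add field_simps d_def)
        also have "\<dots> \<ge> 42 * m * 1" using Dd dpos m0 by (intro mult_left_mono) (auto simp: field_simps)
        finally show ?thesis by simp
      qed
      then show ?thesis using 1 by linarith
    qed
    have expb: "exp (-2*t^2/(real (card V) - 1)) \<le> 1 / n^4"
    proof -
      have n1: "real (card V) - 1 > 0" using cardV2 by simp
      have "-2*t^2/(real (card V) - 1) \<le> -2*t^2/n"
        unfolding n_def using n1 by (intro divide_left_mono_neg) (auto simp: mult_pos_pos)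
      also have "-2*t^2/n = -32 * (n * l^2 / (real k * d powr \<epsilon>)^2)"
        unfolding t_def m_def using n2 by (simp add: power2_eq_square field_simps)
      also have "\<dots> \<le> -32 * l^2"
      proof -
        have kd: "(real k * d powr \<epsilon>)^2 > 0" using P dpe by simp
        have "l^2 * (real k * d powr \<epsilon>)^2 \<le> l^2 * n" using P(9) by (intro mult_left_mono) auto
        then have "l^2 \<le> n * l^2 / (real k * d powr \<epsilon>)^2" using kd by (simp add: field_simps)
        then show ?thesis by simp
      qed
      also have "\<dots> \<le> -4 * l"
      proof -
        have l1: "l \<ge> 1" unfolding l_def using P by simp
        then have "l * l \<ge> 1 * l" by (intro mult_right_mono) auto
        then show ?thesis using l1 unfolding power2_eq_square by linarith
      qed
      finally have "exp (-2*t^2/(real (card V) - 1)) \<le> exp (-4 * l)" by simp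
      also have "exp (-4 * l) = 1 / n^4"
      proof -
        have "exp (4 * l) = n^4" unfolding l_def using n2 by (simp add: exp_of_nat_mult[of 4, simplified])
        then show ?thesis by (simp add: exp_minus field_simps)
      qed
      finally show ?thesis .
    qed
    interpret MM: prob_space "labels V" by (rule labels_prob)
    define A where "A = {X \<in> space (labels V). \<forall>v \<in> Sset V E s k X. real (card (Lset V E \<epsilon> s k X v)) \<le> B v}"
    define Bad where "Bad = (\<lambda>v i. {X\<in>space (labels V). v \<in> Spart V E s k X i \<and> B v < real (card (Lset V E \<epsilon> s k X v))})"
    have Asets: "A \<in> sets (labels V)" unfolding A_def by (rule A_meas[OF finV])
    have Badsets: "Bad v i \<in> sets (labels V)" for v i
      unfolding Bad_def using finV by measurable
    have Badb: "measure (labels V) (Bad v i) \<le> 1 / n^4" if "v \<in> V" "i \<in> {1..k}" for v i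
    proof -
      have "measure (labels V) (Bad v i) \<le> exp (-2*t^2/(real (card V) - 1))"
        unfolding Bad_def
        by (rule bad_bound[OF finV that(1) cardV2 _ _ _ that(2) Jb[OF that] c0 t0 Bb[OF that(1)]])
           (use P dpos in \<open>auto simp: d_def\<close>)
      then show ?thesis using expb by linarith
    qed
    have sub: "space (labels V) - A \<subseteq> (\<Union>v\<in>V. \<Union>i\<in>{1..k}. Bad v i)"
    proof
      fix X assume X: "X \<in> space (labels V) - A"
      then obtain v where v: "v \<in> Sset V E s k X" and vb: "\<not> real (card (Lset V E \<epsilon> s k X v)) \<le> B v"
        unfolding A_def by auto
      from v obtain i where i: "i \<in> {1..k}" "v \<in> Spart V E s k X i" unfolding Sset_def by auto
      have "v \<in> V" using i by (simp add: Spart_iff)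
      moreover have "X \<in> Bad v i" unfolding Bad_def using X i vb by auto
      ultimately show "X \<in> (\<Union>v\<in>V. \<Union>i\<in>{1..k}. Bad v i)" using i by blast
    qed
    have "measure (labels V) (space (labels V) - A) \<le> measure (labels V) (\<Union>v\<in>V. \<Union>i\<in>{1..k}. Bad v i)"
      using sub Badsets finV by (intro MM.finite_measure_mono) auto
    also have "\<dots> \<le> (\<Sum>v\<in>V. measure (labels V) (\<Union>i\<in>{1..k}. Bad v i))"
      using Badsets finV by (intro MM.finite_measure_subadditive_finite) auto
    also have "\<dots> \<le> (\<Sum>v\<in>V. \<Sum>i\<in>{1..k}. measure (labels V) (Bad v i))"
      using Badsets by (intro sum_mono MM.finite_measure_subadditive_finite) auto
    also have "\<dots> \<le> (\<Sum>v\<in>V. \<Sum>i\<in>{1..k}. 1 / n^4)"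
      using Badb by (intro sum_mono) auto
    also have "\<dots> = n * real k / n^4" unfolding n_def by simp
    also have "\<dots> \<le> n * n / n^4" using P n2 by (intro divide_right_mono mult_left_mono) auto
    also have "\<dots> = 1 / n^2" using n2 by (simp add: power2_eq_square field_simps power4_eq_xxxx)
    finally have "measure (labels V) (space (labels V) - A) \<le> 1 / n^2" .
    then have "measure (labels V) A \<ge> 1 - 1 / n^2" using MM.prob_compl[OF Asets] by linarith
    then show "measure (labels V)
      {X \<in> space (labels V). \<forall>v \<in> Sset V E s k X.
         real (card (Lset V E \<epsilon> s k X v))
           \<le> 42 * real (card V) * real (deg V E v) * ln (real (card V))
              / (real k * real (mindeg V E) powr (1 + \<epsilon>))}
    \<ge> 1 - 1 / real (card V) ^ 2" unfolding A_def B_def n_def .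
  qed
qed

end
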